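(* Let $p,q,p',q'$ be idempotents in a unital ring $A$ with $p'\sim p$ and $q'\sim q$. Then $\operatorname{sr}(pAq)=1$ if and only if $\operatorname{sr}(p'Aq')=1$.
   Context: For idempotents $p,q$ in a unital ring $A$, $\operatorname{sr}(pAq)=1$ means: whenever $a\in pAq$, $x\in qAp$, $b\in pAp$ satisfy $ax+b=p$, there exist $y\in pAq$, $z\in qAp$ with $(a+by)z=p$. Idempotents $p,q$ are equivalent, $p\sim q$, if there exist $a\in pAq$, $b\in qAp$ with $ab=p$ and $ba=q$. *)

theory Defs
  imports Main
begin

definition idem :: "'a::ring_1 \<Rightarrow> bool" where
  "idem p \<longleftrightarrow> p * p = p"

definition corner :: "'a::ring_1 \<Rightarrow> 'a \<Rightarrow> 'a set" where
  "corner p q = {p * x * q | x. True}"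

definition sr_one :: "'a::ring_1 \<Rightarrow> 'a \<Rightarrow> bool" where
  "sr_one p q \<longleftrightarrow>
     (\<forall>a\<in>corner p q. \<forall>x\<in>corner q p. \<forall>b\<in>corner p p.
        a * x + b = p \<longrightarrow>
        (\<exists>y\<in>corner p q. \<exists>z\<in>corner q p. (a + b * y) * z = p))"

definition idem_equiv :: "'a::ring_1 \<Rightarrow> 'a \<Rightarrow> bool" where
  "idem_equiv p q \<longleftrightarrow>
     (\<exists>a\<in>corner p q. \<exists>b\<in>corner q p. a * b = p \<and> b * a = q)"

end

theory Submission
  imports Defs
begin

lemma corner_iff:
  fixes p q x :: "'a::ring_1"
  assumes "idem p" "idem q"
  shows "x \<in> corner p q \<longleftrightarrow> p * x * q = x"
proof
  assume "x \<in> corner p q"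
  then obtain y where "x = p * y * q" by (auto simp: corner_def)
  then show "p * x * q = x" using assms
    by (simp add: idem_def mult.assoc) (metis mult.assoc)
next
  assume "p * x * q = x"
  then show "x \<in> corner p q" unfolding corner_def by (metis (mono_tags, lifting) mem_Collect_eq)
qed

lemma cornerL:
  fixes p q x :: "'a::ring_1"
  assumes "idem p" "idem q" "x \<in> corner p q"
  shows "p * x = x" "x * q = x" "p * (x * w) = x * w"
proof -
  have e: "p * x * q = x" using corner_iff assms by blast
  have pp: "p * p = p" "q * q = q" using assms by (auto simp: idem_def)
  show 1: "p * x = x" by (metis e pp(1) mult.assoc)
  show "x * q = x" by (metis e pp(2) mult.assoc)
  show "p * (x * w) = x * w" by (metis 1 mult.assoc)
qed

lemma equiv_sym:
  fixes p q :: "'a::ring_1"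
  shows "idem_equiv p q \<Longrightarrow> idem_equiv q p"
  unfolding idem_equiv_def by blast

lemma one_dir:
  fixes p q p' q' :: "'a::ring_1"
  assumes ip: "idem p" and iq: "idem q" and ip': "idem p'" and iq': "idem q'"
    and e1: "idem_equiv p' p" and e2: "idem_equiv q' q"
    and sr: "sr_one p q"
  shows "sr_one p' q'"
proof -
  obtain u v where u: "u \<in> corner p' p" and v: "v \<in> corner p p'" and uv: "u * v = p'" and vu: "v * u = p"
    using e1 unfolding idem_equiv_def by blast
  obtain s t where s: "s \<in> corner q' q" and t: "t \<in> corner q q'" and st: "s * t = q'" and ts: "t * s = q"
    using e2 unfolding idem_equiv_def by blast
  have C: "\<And>x y z w. idem x \<Longrightarrow> idem y \<Longrightarrow> z \<in> corner x y \<Longrightarrow> x * z = z \<and> z * y = z \<and> x * (z * w) = z * w"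
    using cornerL by blast
  have M: "\<And>x y a b c. idem x \<Longrightarrow> idem y \<Longrightarrow> a * b * c \<in> corner x y \<longleftrightarrow> x * (a * b * c) * y = a * b * c"
    using corner_iff by blast
  note cu = C[OF ip' ip u] and cv = C[OF ip ip' v] and cs = C[OF iq' iq s] and ct = C[OF iq iq' t]
  show ?thesis unfolding sr_one_def
  proof (intro ballI impI)
    fix a' x' b'
    assume a': "a' \<in> corner p' q'" and x': "x' \<in> corner q' p'" and b': "b' \<in> corner p' p'"
      and eq: "a' * x' + b' = p'"
    note ca = C[OF ip' iq' a'] and cx = C[OF iq' ip' x'] and cb = C[OF ip' ip' b']
    define a where "a = v * a' * s"
    define x where "x = t * x' * u"
    define b where "b = v * b' * u"
    have aC: "a \<in> corner p q" unfolding a_def using corner_iff[OF ip iq]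
      by (metis cv cs mult.assoc)
    have xC: "x \<in> corner q p" unfolding x_def using corner_iff[OF iq ip]
      by (metis ct cu mult.assoc)
    have bC: "b \<in> corner p p" unfolding b_def using corner_iff[OF ip ip]
      by (metis cv cu mult.assoc)
    have "a * x + b = v * (a' * (s * t) * x' + b') * u"
      by (simp add: a_def x_def b_def algebra_simps)
    also have "\<dots> = v * p' * u" using st ca eq by simp
    also have "\<dots> = p" using cv vu by simp
    finally have "a * x + b = p" .
    then obtain y z where yC: "y \<in> corner p q" and zC: "z \<in> corner q p" and yz: "(a + b * y) * z = p"
      using sr aC xC bC unfolding sr_one_def by blast
    note cy = C[OF ip iq yC] and cz = C[OF iq ip zC]
    define y' where "y' = u * y * t"
    define z' where "z' = s * z * v"
    have y'C: "y' \<in> corner p' q'" unfolding y'_def using corner_iff[OF ip' iq']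
      by (metis cu ct mult.assoc)
    have z'C: "z' \<in> corner q' p'" unfolding z'_def using corner_iff[OF iq' ip']
      by (metis cs cv mult.assoc)
    have "(a' + b' * y') * z' = a' * s * z * v + b' * u * y * (t * s) * z * v"
      by (simp add: y'_def z'_def algebra_simps)
    also have "\<dots> = a' * s * z * v + b' * u * y * z * v" using ts cy by (simp add: mult.assoc)
    also have "\<dots> = (u * v) * (a' * s * z * v) + (u * v) * (b' * u * y * z * v)"
      using uv ca cb by (simp add: mult.assoc)
    also have "\<dots> = u * ((a + b * y) * z) * v"
      by (simp add: a_def b_def algebra_simps)
    also have "\<dots> = p'" using yz cu uv by simp
    finally show "\<exists>y\<in>corner p' q'. \<exists>z\<in>corner q' p'. (a' + b' * y) * z = p'"
      using y'C z'C by blast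
  qed
qed

theorem lemma2:
  fixes p q p' q' :: "'a::ring_1"
  assumes "idem p" and "idem q" and "idem p'" and "idem q'"
    and "idem_equiv p' p" and "idem_equiv q' q"
  shows "sr_one p q \<longleftrightarrow> sr_one p' q'"
  using one_dir[OF assms] one_dir[OF assms(3,4,1,2) equiv_sym[OF assms(5)] equiv_sym[OF assms(6)]]
  by blast

end
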